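(* Let $r\ge1$, $t,s\ge0$ be integers and $\mathbf{u}=(u_1,\dots,u_r)\in\mathbb{Z}_+^r$. Let $\mathbf{u}+s=(u_1+s,\dots,u_r+s)$. Then $|\mathcal{A}_{t,s}(\mathbf{u})|\le|\mathcal{A}_{t,s}(\mathbf{u}+s)|$.
   Context: For $\mathbf{u}\in\mathbb{Z}_+^r$ (positive integers), $\mathcal{A}_{t,s}(\mathbf{u})=\{\mathbf{v}\in\mathbb{Z}_+^r:\ \sum_{i=1}^r\max\{0,u_i-v_i\}\le s,\ \sum_{i=1}^r\max\{0,v_i-u_i\}\le t\}$. *)

theory Defs
  imports Main
begin

text \<open>Vectors in Z_+^r are represented as lists of naturals of length r with all
entries positive. Truncated natural subtraction a - b equals max 0 (a - b).\<close>

definition pos_vec :: "nat \<Rightarrow> nat list \<Rightarrow> bool" where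
  "pos_vec r v \<longleftrightarrow> length v = r \<and> (\<forall>x\<in>set v. 0 < x)"

definition A_set :: "nat \<Rightarrow> nat \<Rightarrow> nat list \<Rightarrow> nat list set" where
  "A_set t s u = {v. pos_vec (length u) v
      \<and> (\<Sum>i<length u. u ! i - v ! i) \<le> s
      \<and> (\<Sum>i<length u. v ! i - u ! i) \<le> t}"

end

theory Submission
  imports Defs
begin

lemma A_finite: "finite (A_set t s w)"
proof -
  let ?M = "sum_list w + t"
  have "A_set t s w \<subseteq> {xs. set xs \<subseteq> {0..?M} \<and> length xs = length w}"
  proof
    fix v assume v: "v \<in> A_set t s w"
    hence len: "length v = length w" and st: "(\<Sum>i<length w. v ! i - w ! i) \<le> t"
      by (auto simp: A_set_def pos_vec_def)
    have "\<forall>x\<in>set v. x \<le> ?M"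
    proof
      fix x assume "x \<in> set v"
      then obtain i where i: "i < length w" "x = v ! i" using len by (auto simp: in_set_conv_nth)
      have "v ! i - w ! i \<le> (\<Sum>i<length w. v ! i - w ! i)"
        by (rule member_le_sum) (use i in auto)
      moreover have "w ! i \<le> sum_list w" using i by (simp add: member_le_sum_list)
      ultimately show "x \<le> ?M" using st i by linarith
    qed
    thus "v \<in> {xs. set xs \<subseteq> {0..?M} \<and> length xs = length w}" using len by auto
  qed
  moreover have "finite {xs. set xs \<subseteq> {0..?M} \<and> length xs = length w}"
    by (rule finite_lists_length_eq) simp
  ultimately show ?thesis by (rule finite_subset)
qed

theorem lemma1:
  fixes r t s :: nat and u :: "nat list"
  assumes "r \<ge> 1" and "pos_vec r u"
  shows "card (A_set t s u) \<le> card (A_set t s (map (\<lambda>x. x + s) u))"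
proof (rule card_inj_on_le)
  show "inj_on (map (\<lambda>x. x + s)) (A_set t s u)"
    by (rule inj_onI) (auto simp: inj_on_def dest: map_inj_on)
  show "finite (A_set t s (map (\<lambda>x. x + s) u))" by (rule A_finite)
  show "map (\<lambda>x. x + s) ` A_set t s u \<subseteq> A_set t s (map (\<lambda>x. x + s) u)"
  proof
    fix y assume "y \<in> map (\<lambda>x. x + s) ` A_set t s u"
    then obtain v where v: "v \<in> A_set t s u" and y: "y = map (\<lambda>x. x + s) v" by blast
    have len: "length v = length u" using v by (auto simp: A_set_def pos_vec_def)
    have e1: "(\<Sum>i<length u. map (\<lambda>x. x + s) u ! i - y ! i) = (\<Sum>i<length u. u ! i - v ! i)"
      by (rule sum.cong) (auto simp: y len)
    have e2: "(\<Sum>i<length u. y ! i - map (\<lambda>x. x + s) u ! i) = (\<Sum>i<length u. v ! i - u ! i)"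
      by (rule sum.cong) (auto simp: y len)
    show "y \<in> A_set t s (map (\<lambda>x. x + s) u)"
      using v e1 e2 len by (auto simp: A_set_def pos_vec_def y)
  qed
qed

end
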